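(* Let $n\ge2$, $(\mathbf a,\mathbf b),(\mathbf a',\mathbf b')\in\mathtt S_n$, and suppose $\|\mathbf a-\mathbf a'\|_\infty\le\epsilon$ and $\|\mathbf b-\mathbf b'\|_\infty\le\epsilon$ for some $\epsilon>0$. Let $\boldsymbol\gamma,\boldsymbol\gamma'$ be their inverse NLFTs and $\delta:=\min\{a_0,a_0'\}$. Then $$\|\boldsymbol\gamma-\boldsymbol\gamma'\|_1<\epsilon\,(3n)^n(1+1/\delta)^{2n}.$$ Consequently the inverse NLFT is a locally Lipschitz bijection from $\mathtt S_n$ (Euclidean topology) onto its image in $\mathbb C^n$.
   Context: For $(\mathbf a,\mathbf b)\in\mathbb C^n\times\mathbb C^n$ let $a(z)=\sum_{k=0}^{n-1}a_kz^{-k}$, $b(z)=\sum_{k=0}^{n-1}b_kz^k$, and $a^*(z):=\overline{a(1/\overline z)}$ (similarly $b^*$). $\mathtt S_n$ is the set of $(\mathbf a,\mathbf b)$ with $a_0$ real and positive and $aa^*+bb^*=1$. The NLFT of $\boldsymbol\gamma$ supported in $\{0,\dots,n-1\}$ is $\prod_{k=0}^{n-1}\frac{1}{\sqrt{1+|\gamma_k|^2}}\begin{pmatrix}1&\gamma_kz^k\\-\overline{\gamma_k}z^{-k}&1\end{pmatrix}=\begin{pmatrix}a&b\\-b^*&a^*\end{pmatrix}$ (ordered by increasing $k$); it is a bijection from such sequences onto $\mathtt S_n$ and its inverse is the inverse NLFT $(\mathbf a,\mathbf b)\mapsto\boldsymbol\gamma=(\gamma_0,\dots,\gamma_{n-1})$.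 *)

theory Defs
  imports "HOL-Analysis.Analysis"
begin

text \<open>Vectors in C^n are represented as functions nat => complex; only the
indices k < n are relevant (elements of S_n and inverse NLFTs are required to
vanish for k >= n).\<close>

definition mat2 :: "complex \<Rightarrow> complex \<Rightarrow> complex \<Rightarrow> complex \<Rightarrow> complex^2^2" where
  "mat2 p q r s = (\<chi> i j. if i = 1 then (if j = 1 then p else q) else (if j = 1 then r else s))"

definition apoly :: "nat \<Rightarrow> (nat \<Rightarrow> complex) \<Rightarrow> complex \<Rightarrow> complex" where
  "apoly n a z = (\<Sum>k<n. a k * inverse z ^ k)"

definition bpoly :: "nat \<Rightarrow> (nat \<Rightarrow> complex) \<Rightarrow> complex \<Rightarrow> complex" where
  "bpoly n b z = (\<Sum>k<n. b k * z ^ k)"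

definition star :: "(complex \<Rightarrow> complex) \<Rightarrow> complex \<Rightarrow> complex" where
  "star f z = cnj (f (1 / cnj z))"

definition nlft_factor :: "complex \<Rightarrow> nat \<Rightarrow> complex \<Rightarrow> complex^2^2" where
  "nlft_factor g k z =
     (let c = complex_of_real (1 / sqrt (1 + (cmod g)\<^sup>2))
      in mat2 c (c * (g * z ^ k)) (c * (- cnj g * inverse z ^ k)) c)"

definition nlft_mat :: "nat \<Rightarrow> (nat \<Rightarrow> complex) \<Rightarrow> complex \<Rightarrow> complex^2^2" where
  "nlft_mat n \<gamma> z = foldl (\<lambda>M k. M ** nlft_factor (\<gamma> k) k z) (mat 1) [0..<n]"

definition is_nlft :: "nat \<Rightarrow> (nat \<Rightarrow> complex) \<Rightarrow> (nat \<Rightarrow> complex) \<Rightarrow> (nat \<Rightarrow> complex) \<Rightarrow> bool" where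
  "is_nlft n \<gamma> a b \<longleftrightarrow> (\<forall>z. z \<noteq> 0 \<longrightarrow>
     nlft_mat n \<gamma> z = mat2 (apoly n a z) (bpoly n b z) (- star (bpoly n b) z) (star (apoly n a) z))"

definition Sn :: "nat \<Rightarrow> ((nat \<Rightarrow> complex) \<times> (nat \<Rightarrow> complex)) set" where
  "Sn n = {(a, b). (\<forall>k\<ge>n. a k = 0 \<and> b k = 0) \<and> a 0 \<in> \<real> \<and> Re (a 0) > 0 \<and>
     (\<forall>z. z \<noteq> 0 \<longrightarrow> apoly n a z * star (apoly n a) z + bpoly n b z * star (bpoly n b) z = 1)}"

definition inv_nlft :: "nat \<Rightarrow> (nat \<Rightarrow> complex) \<Rightarrow> (nat \<Rightarrow> complex) \<Rightarrow> (nat \<Rightarrow> complex)" where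
  "inv_nlft n a b = (THE \<gamma>. (\<forall>k\<ge>n. \<gamma> k = 0) \<and> is_nlft n \<gamma> a b)"

definition supnorm :: "nat \<Rightarrow> (nat \<Rightarrow> complex) \<Rightarrow> real" where
  "supnorm n v = Max (insert 0 ((\<lambda>k. cmod (v k)) ` {..<n}))"

definition l1norm :: "nat \<Rightarrow> (nat \<Rightarrow> complex) \<Rightarrow> real" where
  "l1norm n v = (\<Sum>k<n. cmod (v k))"

text \<open>Distance on C^n x C^n (max norm; all norms are equivalent in finite dimension).\<close>
definition distS :: "nat \<Rightarrow> (nat \<Rightarrow> complex) \<times> (nat \<Rightarrow> complex) \<Rightarrow> (nat \<Rightarrow> complex) \<times> (nat \<Rightarrow> complex) \<Rightarrow> real" where
  "distS n p q = max (supnorm n (\<lambda>k. fst p k - fst q k)) (supnorm n (\<lambda>k. snd p k - snd q k))"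

end

theory Submission
  imports Defs
begin

lemma mat2_nth[simp]:
  "mat2 p q r s $ 1 $ 1 = p" "mat2 p q r s $ 1 $ 2 = q"
  "mat2 p q r s $ 2 $ 1 = r" "mat2 p q r s $ 2 $ 2 = s"
  by (simp_all add: mat2_def)

lemma mat2_eq_iff: "mat2 p q r s = mat2 p2 q2 r2 s2 \<longleftrightarrow> p = p2 \<and> q = q2 \<and> r = r2 \<and> s = s2"
  by (auto simp: mat2_def vec_eq_iff forall_2)

lemma mat2_mult: "mat2 p q r s ** mat2 p2 q2 r2 s2 =
   mat2 (p * p2 + q * r2) (p * q2 + q * s2) (r * p2 + s * r2) (r * q2 + s * s2)"
  by (simp add: vec_eq_iff matrix_matrix_mult_def sum_2 forall_2 mat2_def)

lemma star_apoly: "star (apoly n a) z = (\<Sum>k<n. cnj (a k) * z ^ k)"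
  by (simp add: star_def apoly_def)

lemma star_bpoly: "star (bpoly n b) z = (\<Sum>k<n. cnj (b k) * inverse z ^ k)"
  by (simp add: star_def bpoly_def divide_inverse)

lemma nlft_mat_Suc: "nlft_mat (Suc m) \<gamma> z = nlft_mat m \<gamma> z ** nlft_factor (\<gamma> m) m z"
  by (simp add: nlft_mat_def)

lemma nlft_mat_cong: "(\<And>k. k < n \<Longrightarrow> \<gamma> k = \<gamma>' k) \<Longrightarrow> nlft_mat n \<gamma> z = nlft_mat n \<gamma>' z"
  unfolding nlft_mat_def by (rule foldl_cong) auto

lemma apoly_cong: "(\<And>k. k < n \<Longrightarrow> a k = a' k) \<Longrightarrow> apoly n a z = apoly n a' z"
  by (simp add: apoly_def)
lemma bpoly_cong: "(\<And>k. k < n \<Longrightarrow> a k = a' k) \<Longrightarrow> bpoly n a z = bpoly n a' z"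
  by (simp add: bpoly_def)

lemma flip_sum: "(\<Sum>j<Suc m. f (m - j)) = (\<Sum>j<Suc m. (f j :: complex))"
  using sum.nat_diff_reindex[of f "Suc m"] by simp

lemma flip_pow:
  fixes w :: complex
  assumes "w \<noteq> 0"
  shows "(\<Sum>j<Suc m. y (m - j) * w ^ j) = w ^ m * (\<Sum>i<Suc m. y i * inverse w ^ i)"
proof -
  have "(\<Sum>j<Suc m. y (m - j) * w ^ j) = (\<Sum>j<Suc m. y (m - j) * w ^ (m - (m - j)))"
    by (rule sum.cong) auto
  also have "\<dots> = (\<Sum>j<Suc m. y j * w ^ (m - j))"
    using flip_sum[of "\<lambda>j. y j * w ^ (m - j)" m] by simp
  also have "\<dots> = (\<Sum>j<Suc m. w ^ m * (y j * inverse w ^ j))"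
    by (rule sum.cong) (auto simp: power_diff assms divide_inverse power_inverse)
  finally show ?thesis by (simp only: sum_distrib_left)
qed

definition cf :: "complex \<Rightarrow> real" where "cf g = 1 / sqrt (1 + (cmod g)\<^sup>2)"

definition mixA :: "nat \<Rightarrow> complex \<Rightarrow> (nat \<Rightarrow> complex) \<Rightarrow> (nat \<Rightarrow> complex) \<Rightarrow> nat \<Rightarrow> complex" where
  "mixA m g a b j = (if j \<le> m then complex_of_real (cf g) * (a j - cnj g * b (m - j)) else 0)"
definition mixB :: "nat \<Rightarrow> complex \<Rightarrow> (nat \<Rightarrow> complex) \<Rightarrow> (nat \<Rightarrow> complex) \<Rightarrow> nat \<Rightarrow> complex" where
  "mixB m g a b j = (if j \<le> m then complex_of_real (cf g) * (b j + g * a (m - j)) else 0)"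

lemma cf_pos: "cf g > 0" by (simp add: cf_def add_pos_nonneg)
lemma cf_le1: "cf g \<le> 1"
proof -
  have "1 \<le> sqrt (1 + (cmod g)\<^sup>2)" by simp
  then show ?thesis unfolding cf_def by (simp add: divide_le_eq_1 add_pos_nonneg)
qed

lemma nlft_factor_cf: "nlft_factor g k z = (let c = complex_of_real (cf g) in mat2 c (c * (g * z ^ k)) (c * (- cnj g * inverse z ^ k)) c)"
  by (simp add: nlft_factor_def cf_def)
lemma cf_uminus[simp]: "cf (- g) = cf g" by (simp add: cf_def)
lemma cf_sq: "(complex_of_real (cf g))\<^sup>2 * (1 + g * cnj g) = 1"
proof -
  have "g * cnj g = complex_of_real ((cmod g)\<^sup>2)" using complex_norm_square[of g] by simp
  moreover have "(cf g)\<^sup>2 * (1 + (cmod g)\<^sup>2) = 1"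
  proof -
    have p: "1 + (cmod g)\<^sup>2 > 0" by (simp add: add_pos_nonneg)
    then show ?thesis by (simp add: cf_def power_divide)
  qed
  ultimately show ?thesis
    by (metis (mono_tags, lifting) of_real_1 of_real_add of_real_mult of_real_power)
qed

lemma apoly_mix:
  assumes "z \<noteq> 0"
  shows "apoly (Suc m) (mixA m g a b) z = complex_of_real (cf g) * (apoly (Suc m) a z - cnj g * inverse z ^ m * bpoly (Suc m) b z)"
proof -
  let ?c = "complex_of_real (cf g)"
  have "apoly (Suc m) (mixA m g a b) z = (\<Sum>j<Suc m. ?c * (a j * inverse z ^ j) - ?c * cnj g * (b (m-j) * inverse z ^ j))"
    unfolding apoly_def mixA_def by (intro sum.cong) (auto simp: algebra_simps)
  also have "\<dots> = ?c * apoly (Suc m) a z - ?c * cnj g * (\<Sum>j<Suc m. b (m-j) * inverse z ^ j)"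
    by (simp only: sum_subtractf sum_distrib_left apoly_def)
  also have "(\<Sum>j<Suc m. b (m-j) * inverse z ^ j) = inverse z ^ m * bpoly (Suc m) b z"
    using flip_pow[of "inverse z" b m] assms by (simp add: bpoly_def)
  finally show ?thesis by (simp add: algebra_simps)
qed

lemma bpoly_mix:
  assumes "z \<noteq> 0"
  shows "bpoly (Suc m) (mixB m g a b) z = complex_of_real (cf g) * (bpoly (Suc m) b z + g * z ^ m * apoly (Suc m) a z)"
proof -
  let ?c = "complex_of_real (cf g)"
  have "bpoly (Suc m) (mixB m g a b) z = (\<Sum>j<Suc m. ?c * (b j * z ^ j) + ?c * g * (a (m-j) * z ^ j))"
    unfolding bpoly_def mixB_def by (intro sum.cong) (auto simp: algebra_simps)
  also have "\<dots> = ?c * bpoly (Suc m) b z + ?c * g * (\<Sum>j<Suc m. a (m-j) * z ^ j)"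
    by (simp only: sum.distrib sum_distrib_left bpoly_def)
  also have "(\<Sum>j<Suc m. a (m-j) * z ^ j) = z ^ m * apoly (Suc m) a z"
    using flip_pow[of z a m] assms by (simp add: apoly_def)
  finally show ?thesis by (simp add: algebra_simps)
qed

lemma star_apoly_mix:
  assumes "z \<noteq> 0"
  shows "star (apoly (Suc m) (mixA m g a b)) z = complex_of_real (cf g) * (star (apoly (Suc m) a) z - g * z ^ m * star (bpoly (Suc m) b) z)"
proof -
  have u: "1 / cnj z \<noteq> 0" using assms by simp
  show ?thesis unfolding star_def apoly_mix[OF u]
    by (simp add: power_inverse)
qed

lemma star_bpoly_mix:
  assumes "z \<noteq> 0"
  shows "star (bpoly (Suc m) (mixB m g a b)) z = complex_of_real (cf g) * (star (bpoly (Suc m) b) z + cnj g * inverse z ^ m * star (apoly (Suc m) a) z)"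
proof -
  have u: "1 / cnj z \<noteq> 0" using assms by simp
  show ?thesis unfolding star_def bpoly_mix[OF u]
    by (simp add: power_inverse divide_inverse)
qed

lemma apoly_Suc0: "a m = 0 \<Longrightarrow> apoly (Suc m) a = apoly m a"
  by (rule ext) (simp add: apoly_def)
lemma bpoly_Suc0: "b m = 0 \<Longrightarrow> bpoly (Suc m) b = bpoly m b"
  by (rule ext) (simp add: bpoly_def)

lemma fwd_step:
  assumes "is_nlft m \<gamma> A B" "\<forall>k\<ge>m. A k = 0 \<and> B k = 0" "\<forall>k<m. \<gamma>2 k = \<gamma> k" "\<gamma>2 m = h"
  shows "is_nlft (Suc m) \<gamma>2 (mixA m h A B) (mixB m h A B)"
  unfolding is_nlft_def
proof (intro allI impI)
  fix z :: complex assume z: "z \<noteq> 0"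
  have A: "apoly m A = apoly (Suc m) A" and B: "bpoly m B = bpoly (Suc m) B"
    using assms(2) by (simp_all add: apoly_Suc0 bpoly_Suc0)
  have "nlft_mat (Suc m) \<gamma>2 z = nlft_mat m \<gamma> z ** nlft_factor h m z"
    using nlft_mat_cong[of m \<gamma>2 \<gamma> z] assms(3,4) by (simp add: nlft_mat_Suc)
  also have "\<dots> = mat2 (apoly (Suc m) A z) (bpoly (Suc m) B z) (- star (bpoly (Suc m) B) z) (star (apoly (Suc m) A) z) ** nlft_factor h m z"
    using assms(1) z unfolding is_nlft_def A B by simp
  finally show "nlft_mat (Suc m) \<gamma>2 z = mat2 (apoly (Suc m) (mixA m h A B) z) (bpoly (Suc m) (mixB m h A B) z)
        (- star (bpoly (Suc m) (mixB m h A B)) z) (star (apoly (Suc m) (mixA m h A B)) z)"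
    unfolding apoly_mix[OF z] bpoly_mix[OF z] star_apoly_mix[OF z] star_bpoly_mix[OF z]
    by (simp add: nlft_factor_cf Let_def mat2_mult mat2_eq_iff algebra_simps)
qed

lemma fwd_base:
  "is_nlft 1 \<gamma> (\<lambda>k. if k = 0 then complex_of_real (cf (\<gamma> 0)) else 0)
                (\<lambda>k. if k = 0 then complex_of_real (cf (\<gamma> 0)) * \<gamma> 0 else 0)"
  unfolding is_nlft_def
  by (simp add: nlft_mat_def nlft_factor_cf Let_def apoly_def bpoly_def star_def mat2_eq_iff)

lemma fwd_exists:
  "n \<ge> 1 \<Longrightarrow> \<exists>A B. (\<forall>k\<ge>n. A k = 0 \<and> B k = 0) \<and> is_nlft n \<gamma> A B"
proof (induction n rule: dec_induct)
  case base
  show ?case by (rule exI, rule exI, rule conjI[OF _ fwd_base]) auto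
next
  case (step m)
  then obtain A B where AB: "\<forall>k\<ge>m. A k = 0 \<and> B k = 0" "is_nlft m \<gamma> A B" by blast
  have "is_nlft (Suc m) \<gamma> (mixA m (\<gamma> m) A B) (mixB m (\<gamma> m) A B)"
    by (rule fwd_step[OF AB(2) AB(1)]) auto
  moreover have "\<forall>k\<ge>Suc m. mixA m (\<gamma> m) A B k = 0 \<and> mixB m (\<gamma> m) A B k = 0"
    by (simp add: mixA_def mixB_def)
  ultimately show ?case by blast
qed

lemma cont_eq0:
  fixes f g :: "complex \<Rightarrow> complex"
  assumes "isCont f 0" "isCont g 0" "\<And>z. z \<noteq> 0 \<Longrightarrow> f z = g z"
  shows "f 0 = g 0"
proof -
  have 1: "(f \<longlongrightarrow> f 0) (at 0)" using assms(1) isCont_def by blast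
  have "(g \<longlongrightarrow> g 0) (at 0)" using assms(2) isCont_def by blast
  moreover have "eventually (\<lambda>z. g z = f z) (at 0)"
    using assms(3) by (auto simp: eventually_at_filter)
  ultimately have 2: "(f \<longlongrightarrow> g 0) (at 0)" by (rule Lim_transform_eventually)
  show ?thesis using tendsto_unique[OF at_neq_bot 1 2] .
qed

lemma poly_coeff_zero:
  "(\<forall>z. z \<noteq> 0 \<longrightarrow> (\<Sum>k<n. d k * z ^ k) = (0::complex)) \<Longrightarrow> k < n \<Longrightarrow> d k = 0"
proof (induction n arbitrary: d k)
  case 0 then show ?case by simp
next
  case (Suc n)
  have d0: "d 0 = 0"
  proof -
    have "(\<lambda>z. \<Sum>k<Suc n. d k * z ^ k) 0 = (\<lambda>z. 0) 0"
      by (rule cont_eq0) (use Suc.prems(1) in \<open>auto intro!: continuous_intros\<close>)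
    then show ?thesis by (simp add: sum.lessThan_Suc_shift)
  qed
  have "\<forall>z. z \<noteq> 0 \<longrightarrow> (\<Sum>k<n. d (Suc k) * z ^ k) = 0"
  proof (intro allI impI)
    fix z :: complex assume z: "z \<noteq> 0"
    have "0 = (\<Sum>k<Suc n. d k * z ^ k)" using Suc.prems(1) z by simp
    also have "\<dots> = z * (\<Sum>k<n. d (Suc k) * z ^ k)"
      unfolding sum.lessThan_Suc_shift by (simp add: d0 sum_distrib_left algebra_simps del: sum.lessThan_Suc)
    finally show "(\<Sum>k<n. d (Suc k) * z ^ k) = 0" using z by simp
  qed
  note IH = Suc.IH[OF this]
  show ?case
  proof (cases k)
    case 0 then show ?thesis using d0 by simp
  next
    case (Suc k') then show ?thesis using IH[of k'] \<open>k < Suc n\<close> by simp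
  qed
qed

lemma bpoly_coeff_eq:
  assumes "\<forall>z. z \<noteq> 0 \<longrightarrow> bpoly n p z = bpoly n q z" "k < n"
  shows "p k = q k"
proof -
  have "\<forall>z. z \<noteq> 0 \<longrightarrow> (\<Sum>k<n. (p k - q k) * z ^ k) = 0"
    using assms(1) by (simp add: bpoly_def algebra_simps sum_subtractf)
  from poly_coeff_zero[OF this assms(2)] show ?thesis by simp
qed

lemma apoly_coeff_eq:
  assumes "\<forall>z. z \<noteq> 0 \<longrightarrow> apoly n p z = apoly n q z" "k < n"
  shows "p k = q k"
proof -
  have "\<forall>z. z \<noteq> 0 \<longrightarrow> (\<Sum>k<n. (p k - q k) * z ^ k) = 0"
  proof (intro allI impI)
    fix z :: complex assume "z \<noteq> 0"
    then have "apoly n p (inverse z) = apoly n q (inverse z)" using assms(1) by simp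
    then show "(\<Sum>k<n. (p k - q k) * z ^ k) = 0"
      by (simp add: apoly_def algebra_simps sum_subtractf)
  qed
  from poly_coeff_zero[OF this assms(2)] show ?thesis by simp
qed

lemma Sn_D:
  assumes "(a, b) \<in> Sn n"
  shows "\<And>k. k \<ge> n \<Longrightarrow> a k = 0" "\<And>k. k \<ge> n \<Longrightarrow> b k = 0" "a 0 = complex_of_real (Re (a 0))" "Re (a 0) > 0"
    "\<And>z. z \<noteq> 0 \<Longrightarrow> apoly n a z * star (apoly n a) z + bpoly n b z * star (bpoly n b) z = 1"
  using assms by (auto simp: Sn_def complex_is_Real_iff)

lemma vanish:
  assumes "(a, b) \<in> Sn (Suc m)" "m \<ge> 1"
  shows "a m * cnj (a 0) + b 0 * cnj (b m) = 0"
proof -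
  define F where "F z = (\<Sum>j<Suc m. a j * z ^ (m - j)) * (\<Sum>i<Suc m. cnj (a i) * z ^ i)
      + (\<Sum>j<Suc m. b j * z ^ j) * (\<Sum>i<Suc m. cnj (b i) * z ^ (m - i))" for z
  have "F 0 = (\<lambda>z. z ^ m) 0"
  proof (rule cont_eq0)
    show "isCont F 0" unfolding F_def by (intro continuous_intros)
    show "isCont (\<lambda>z::complex. z ^ m) 0" by (auto intro!: continuous_intros)
    fix z :: complex assume z: "z \<noteq> 0"
    have e1: "(\<Sum>j<Suc m. a j * z ^ (m - j)) = z ^ m * apoly (Suc m) a z"
      unfolding apoly_def sum_distrib_left
      by (rule sum.cong) (auto simp: power_diff z divide_inverse power_inverse)
    have e2: "(\<Sum>i<Suc m. cnj (b i) * z ^ (m - i)) = z ^ m * star (bpoly (Suc m) b) z"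
      unfolding star_bpoly sum_distrib_left
      by (rule sum.cong) (auto simp: power_diff z divide_inverse power_inverse)
    have "F z = z ^ m * (apoly (Suc m) a z * star (apoly (Suc m) a) z + bpoly (Suc m) b z * star (bpoly (Suc m) b) z)"
      unfolding F_def e1 e2 star_apoly by (simp add: bpoly_def algebra_simps)
    then show "F z = z ^ m" using Sn_D(5)[OF assms(1) z] by simp
  qed
  moreover have "F 0 = a m * cnj (a 0) + b 0 * cnj (b m)"
  proof -
    have s1: "(\<Sum>j<Suc m. a j * 0 ^ (m - j)) = a m"
      by (simp add: sum.lessThan_Suc) (rule sum.neutral, simp)
    have s2: "(\<Sum>j<Suc m. cnj (b j) * 0 ^ (m - j)) = cnj (b m)"
      by (simp add: sum.lessThan_Suc) (rule sum.neutral, simp)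
    show ?thesis unfolding F_def s1 s2 by (simp add: sum.lessThan_Suc_shift)
  qed
  ultimately show ?thesis using assms(2) by simp
qed

lemma mix_inv:
  "mixA m g (mixA m (-g) a b) (mixB m (-g) a b) k = (if k \<le> m then a k else 0) \<and>
   mixB m g (mixA m (-g) a b) (mixB m (-g) a b) k = (if k \<le> m then b k else 0)"
proof (cases "k \<le> m")
  case True
  let ?c = "complex_of_real (cf g)"
  have mk: "m - (m - k) = k" using True by simp
  have c: "?c * ?c * (1 + g * cnj g) = 1" using cf_sq[of g] by (simp add: power2_eq_square)
  have "mixA m g (mixA m (-g) a b) (mixB m (-g) a b) k = (?c * ?c * (1 + g * cnj g)) * a k"
    using True by (simp add: mixA_def mixB_def mk algebra_simps)
  moreover have "mixB m g (mixA m (-g) a b) (mixB m (-g) a b) k = (?c * ?c * (1 + g * cnj g)) * b k"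
    using True by (simp add: mixA_def mixB_def mk algebra_simps)
  ultimately show ?thesis using True c by simp
next
  case False then show ?thesis by (simp add: mixA_def mixB_def)
qed

lemma mix_inv':
  "mixA m (-g) (mixA m g a b) (mixB m g a b) k = (if k \<le> m then a k else 0) \<and>
   mixB m (-g) (mixA m g a b) (mixB m g a b) k = (if k \<le> m then b k else 0)"
  using mix_inv[of m "-g" a b k] by simp

lemma mix_cong:
  assumes "\<And>k. k \<le> m \<Longrightarrow> a k = a2 k \<and> b k = b2 k"
  shows "mixA m g a b = mixA m g a2 b2" "mixB m g a b = mixB m g a2 b2"
  using assms by (auto simp: mixA_def mixB_def fun_eq_iff)

lemma unit_alg:
  fixes c g w v A As B Bs :: complex
  assumes "w * v = 1" "c\<^sup>2 * (1 + g * cnj g) = 1" "A * As + B * Bs = 1"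
  shows "(c * (A + cnj g * v * B)) * (c * (As + g * w * Bs)) + (c * (B - g * w * A)) * (c * (Bs - cnj g * v * As)) = 1"
proof -
  have "(c * (A + cnj g * v * B)) * (c * (As + g * w * Bs)) + (c * (B - g * w * A)) * (c * (Bs - cnj g * v * As))
     = c\<^sup>2 * (1 + g * cnj g * (w * v)) * (A * As + B * Bs)"
    by (simp add: power2_eq_square algebra_simps)
  then show ?thesis using assms by simp
qed

lemma is_nlft_cong:
  assumes "is_nlft n \<gamma> a b" "\<And>k. k < n \<Longrightarrow> a k = a2 k" "\<And>k. k < n \<Longrightarrow> b k = b2 k"
  shows "is_nlft n \<gamma> a2 b2"
proof -
  have "apoly n a = apoly n a2" "bpoly n b = bpoly n b2"
    using assms(2,3) by (auto intro!: ext apoly_cong bpoly_cong)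
  then show ?thesis using assms(1) by (simp add: is_nlft_def)
qed

lemma is_nlft_same:
  assumes "is_nlft n \<gamma> a b" "is_nlft n \<gamma> a2 b2" "k < n"
  shows "a k = a2 k \<and> b k = b2 k"
proof -
  have "\<forall>z. z \<noteq> 0 \<longrightarrow> apoly n a z = apoly n a2 z" "\<forall>z. z \<noteq> 0 \<longrightarrow> bpoly n b z = bpoly n b2 z"
    using assms(1,2) by (auto simp: is_nlft_def mat2_eq_iff)
  then show ?thesis using apoly_coeff_eq bpoly_coeff_eq assms(3) by blast
qed

lemma flip_sum_gen: "(\<Sum>j<Suc m. f (m - j)) = (\<Sum>j<Suc m. (f j :: 'a::comm_monoid_add))"
  using sum.nat_diff_reindex[of f "Suc m"] by simp

lemma pair_norm:
  "(cmod (complex_of_real (cf g) * (x - cnj g * y)))\<^sup>2 + (cmod (complex_of_real (cf g) * (y + g * x)))\<^sup>2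
   = (cmod x)\<^sup>2 + (cmod y)\<^sup>2"
proof -
  let ?c = "complex_of_real (cf g)"
  have c: "?c\<^sup>2 * (1 + g * cnj g) = 1" by (rule cf_sq)
  have "complex_of_real ((cmod (?c * (x - cnj g * y)))\<^sup>2 + (cmod (?c * (y + g * x)))\<^sup>2)
     = (?c * (x - cnj g * y)) * cnj (?c * (x - cnj g * y)) + (?c * (y + g * x)) * cnj (?c * (y + g * x))"
    by (simp only: of_real_add complex_norm_square)
  also have "\<dots> = ?c\<^sup>2 * (1 + g * cnj g) * (x * cnj x + y * cnj y)"
    by (simp add: power2_eq_square algebra_simps)
  also have "\<dots> = complex_of_real ((cmod x)\<^sup>2 + (cmod y)\<^sup>2)"
    using c by (simp only: of_real_add complex_norm_square mult_1)
  finally show ?thesis using of_real_eq_iff by blast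
qed

lemma mix_norm:
  "(\<Sum>k<Suc m. (cmod (mixA m g a b k))\<^sup>2 + (cmod (mixB m g a b k))\<^sup>2) = (\<Sum>k<Suc m. (cmod (a k))\<^sup>2 + (cmod (b k))\<^sup>2)"
proof -
  have "(\<Sum>k<Suc m. (cmod (mixA m g a b k))\<^sup>2 + (cmod (mixB m g a b k))\<^sup>2)
      = (\<Sum>k<Suc m. (cmod (mixA m g a b k))\<^sup>2) + (\<Sum>k<Suc m. (cmod (mixB m g a b (m - k)))\<^sup>2)"
    by (simp only: sum.distrib flip_sum_gen[of "\<lambda>k. (cmod (mixB m g a b k))\<^sup>2"])
  also have "\<dots> = (\<Sum>k<Suc m. (cmod (mixA m g a b k))\<^sup>2 + (cmod (mixB m g a b (m - k)))\<^sup>2)"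
    by (simp only: sum.distrib)
  also have "\<dots> = (\<Sum>k<Suc m. (cmod (a k))\<^sup>2 + (cmod (b (m - k)))\<^sup>2)"
  proof (rule sum.cong)
    fix k assume "k \<in> {..<Suc m}"
    then have mk: "m - (m - k) = k" "k \<le> m" by auto
    show "(cmod (mixA m g a b k))\<^sup>2 + (cmod (mixB m g a b (m - k)))\<^sup>2 = (cmod (a k))\<^sup>2 + (cmod (b (m - k)))\<^sup>2"
      using pair_norm[of g "a k" "b (m - k)"] mk by (simp add: mixA_def mixB_def)
  qed simp
  also have "\<dots> = (\<Sum>k<Suc m. (cmod (a k))\<^sup>2) + (\<Sum>k<Suc m. (cmod (b k))\<^sup>2)"
    by (simp only: sum.distrib flip_sum_gen[of "\<lambda>k. (cmod (b k))\<^sup>2"])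
  finally show ?thesis by (simp only: sum.distrib)
qed

lemma strip:
  assumes ab: "(a, b) \<in> Sn (Suc m)" and m: "m \<ge> 1" and g: "g = b m / a 0"
  shows "(mixA m (-g) a b, mixB m (-g) a b) \<in> Sn m" "Re (mixA m (-g) a b 0) \<ge> Re (a 0)"
    "mixA m (-g) a b 0 = complex_of_real (Re (mixA m (-g) a b 0))"
proof -
  define r where "r = Re (a 0)"
  have r: "r > 0" "a 0 = complex_of_real r" using Sn_D[OF ab] r_def by auto
  have a0: "a 0 \<noteq> 0" using r by auto
  let ?c = "complex_of_real (cf g)"
  define a' where "a' = mixA m (-g) a b"
  define b' where "b' = mixB m (-g) a b"
  have cg: "cnj g = cnj (b m) / a 0" using g r by simp
  have a'm: "a' m = 0"
  proof -
    have v: "a m * a 0 + b 0 * cnj (b m) = 0" using vanish[OF ab m] r by simp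
    have "a m + cnj g * b 0 = (a m * a 0 + b 0 * cnj (b m)) / a 0"
      using a0 cg by (simp add: field_simps)
    then have "a m + cnj g * b 0 = 0" using v by simp
    then show ?thesis by (simp add: a'_def mixA_def)
  qed
  have b'm: "b' m = 0" using a0 g by (simp add: b'_def mixB_def)
  have supp: "\<forall>k\<ge>m. a' k = 0 \<and> b' k = 0"
  proof (intro allI impI)
    fix k assume "k \<ge> m"
    then show "a' k = 0 \<and> b' k = 0" using a'm b'm
      by (cases "k = m") (auto simp: a'_def b'_def mixA_def mixB_def)
  qed
  define t where "t = (cmod (b m))\<^sup>2 / r\<^sup>2"
  have t: "t \<ge> 0" "(cmod g)\<^sup>2 = t" using r g by (simp_all add: t_def norm_divide power_divide)
  have "cnj g * b m = complex_of_real ((cmod (b m))\<^sup>2 / r)"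
    using cg r complex_norm_square[of "b m"] by (simp add: mult.commute)
  then have "a' 0 = ?c * complex_of_real (r + (cmod (b m))\<^sup>2 / r)"
    using r by (simp add: a'_def mixA_def)
  also have "r + (cmod (b m))\<^sup>2 / r = r * (1 + t)" using r by (simp add: t_def field_simps power2_eq_square)
  also have "cf g * (r * (1 + t)) = r * sqrt (1 + t)"
  proof -
    have "(1 + t) / sqrt (1 + t) = sqrt (1 + t)" using t by (simp add: real_div_sqrt)
    then show ?thesis using t by (simp add: cf_def) (metis mult.commute times_divide_eq_right)
  qed
  then have "?c * complex_of_real (r * (1 + t)) = complex_of_real (r * sqrt (1 + t))"
    by (metis of_real_mult)
  finally have a'0: "a' 0 = complex_of_real (r * sqrt (1 + t))" .
  have ge: "r * sqrt (1 + t) \<ge> r" using r t by simp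
  have unit: "apoly m a' z * star (apoly m a') z + bpoly m b' z * star (bpoly m b') z = 1" if z: "z \<noteq> 0" for z
  proof -
    have A: "apoly m a' = apoly (Suc m) a'" "bpoly m b' = bpoly (Suc m) b'"
      using apoly_Suc0[of a' m] bpoly_Suc0[of b' m] a'm b'm by simp_all
    have e1: "apoly (Suc m) a' z = ?c * (apoly (Suc m) a z + cnj g * inverse z ^ m * bpoly (Suc m) b z)"
      unfolding a'_def apoly_mix[OF z] by simp
    have e2: "star (apoly (Suc m) a') z = ?c * (star (apoly (Suc m) a) z + g * z ^ m * star (bpoly (Suc m) b) z)"
      unfolding a'_def star_apoly_mix[OF z] by simp
    have e3: "bpoly (Suc m) b' z = ?c * (bpoly (Suc m) b z - g * z ^ m * apoly (Suc m) a z)"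
      unfolding b'_def bpoly_mix[OF z] by simp
    have e4: "star (bpoly (Suc m) b') z = ?c * (star (bpoly (Suc m) b) z - cnj g * inverse z ^ m * star (apoly (Suc m) a) z)"
      unfolding b'_def star_bpoly_mix[OF z] by simp
    have wv: "z ^ m * inverse z ^ m = 1" using z by (simp add: power_inverse field_simps)
    show ?thesis unfolding A e1 e2 e3 e4
      using unit_alg[OF wv cf_sq Sn_D(5)[OF ab z]] by (simp add: algebra_simps)
  qed
  show "(mixA m (-g) a b, mixB m (-g) a b) \<in> Sn m"
    unfolding Sn_def using supp a'0 r ge unit by (auto simp: a'_def b'_def)
  show "Re (mixA m (-g) a b 0) \<ge> Re (a 0)" using a'0 ge r_def by (simp add: a'_def)
  show "mixA m (-g) a b 0 = complex_of_real (Re (mixA m (-g) a b 0))" using a'0 by (simp add: a'_def)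
qed

fun invn :: "nat \<Rightarrow> (nat \<Rightarrow> complex) \<Rightarrow> (nat \<Rightarrow> complex) \<Rightarrow> nat \<Rightarrow> complex" where
  "invn 0 a b = (\<lambda>k. 0)"
| "invn (Suc m) a b = (invn m (mixA m (- (b m / a 0)) a b) (mixB m (- (b m / a 0)) a b))(m := b m / a 0)"

lemma invn_supp: "k \<ge> n \<Longrightarrow> invn n a b k = 0"
  by (induction n arbitrary: a b) auto

lemma Sn1_norm:
  assumes "(a, b) \<in> Sn 1"
  shows "(cmod (a 0))\<^sup>2 + (cmod (b 0))\<^sup>2 = 1"
proof -
  have "apoly 1 a 1 * star (apoly 1 a) 1 + bpoly 1 b 1 * star (bpoly 1 b) 1 = 1"
    using Sn_D(5)[OF assms, of 1] by simp
  then have "a 0 * cnj (a 0) + b 0 * cnj (b 0) = 1"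
    by (simp add: apoly_def bpoly_def star_apoly star_bpoly)
  then have "complex_of_real ((cmod (a 0))\<^sup>2 + (cmod (b 0))\<^sup>2) = 1"
    by (simp only: of_real_add complex_norm_square)
  then show ?thesis by (metis of_real_eq_1_iff)
qed

lemma Sn1_cf:
  assumes "(a, b) \<in> Sn 1"
  shows "complex_of_real (cf (b 0 / a 0)) = a 0"
proof -
  define r where "r = Re (a 0)"
  have r: "r > 0" "a 0 = complex_of_real r" using Sn_D[OF assms] r_def by auto
  have n: "r\<^sup>2 + (cmod (b 0))\<^sup>2 = 1" using Sn1_norm[OF assms] r by simp
  have "1 + (cmod (b 0 / a 0))\<^sup>2 = 1 / r\<^sup>2"
    using r n by (simp add: norm_divide power_divide field_simps)
  then have "cf (b 0 / a 0) = r" using r by (simp add: cf_def real_sqrt_divide)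
  then show ?thesis using r by simp
qed

lemma Sn_pos: "(a, b) \<in> Sn n \<Longrightarrow> n \<ge> 1"
  by (cases n) (auto simp: Sn_def)

lemma invn_correct:
  "(a, b) \<in> Sn n \<Longrightarrow> is_nlft n (invn n a b) a b"
proof (induction n arbitrary: a b)
  case 0 then show ?case using Sn_pos by fastforce
next
  case (Suc m)
  show ?case
  proof (cases "m = 0")
    case True
    define \<gamma> where "\<gamma> = invn (Suc m) a b"
    have g0: "\<gamma> 0 = b 0 / a 0" using True by (simp add: \<gamma>_def)
    have c: "complex_of_real (cf (b 0 / a 0)) = a 0" using Sn1_cf Suc.prems True by simp
    have a0: "a 0 \<noteq> 0" using Sn_D(4)[OF Suc.prems] by auto
    have "is_nlft 1 \<gamma> a b"
      by (rule is_nlft_cong[OF fwd_base]) (use g0 c a0 in auto)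
    then show ?thesis using True unfolding \<gamma>_def by (simp del: invn.simps)
  next
    case False
    define g where "g = b m / a 0"
    have m: "m \<ge> 1" using False by simp
    note st = strip[OF Suc.prems m g_def]
    note IH = Suc.IH[OF st(1)]
    have "is_nlft (Suc m) (invn (Suc m) a b) (mixA m g (mixA m (-g) a b) (mixB m (-g) a b))
              (mixB m g (mixA m (-g) a b) (mixB m (-g) a b))"
      by (rule fwd_step[OF IH]) (use st(1) in \<open>auto simp: g_def Sn_def\<close>)
    then show ?thesis
      by (rule is_nlft_cong) (auto simp: mix_inv)
  qed
qed

lemma invn_unique:
  "(a, b) \<in> Sn n \<Longrightarrow> is_nlft n \<gamma> a b \<Longrightarrow> k < n \<Longrightarrow> \<gamma> k = invn n a b k"
proof (induction n arbitrary: a b \<gamma> k)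
  case 0 then show ?case by simp
next
  case (Suc m)
  have a0: "a 0 \<noteq> 0" using Sn_D(4)[OF Suc.prems(1)] by auto
  show ?case
  proof (cases "m = 0")
    case True
    have "a 0 = complex_of_real (cf (\<gamma> 0)) \<and> b 0 = complex_of_real (cf (\<gamma> 0)) * \<gamma> 0"
      using is_nlft_same[OF _ fwd_base[of \<gamma>], of a b 0] Suc.prems(2) True by simp
    then have "\<gamma> 0 = b 0 / a 0" using a0 by simp
    then show ?thesis using True Suc.prems(3) by simp
  next
    case False
    then have m: "m \<ge> 1" by simp
    obtain A B where AB: "\<forall>k\<ge>m. A k = 0 \<and> B k = 0" "is_nlft m \<gamma> A B"
      using fwd_exists[OF m, of \<gamma>] by blast
    define h where "h = \<gamma> m"
    have fs: "is_nlft (Suc m) \<gamma> (mixA m h A B) (mixB m h A B)"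
      by (rule fwd_step[OF AB(2)]) (use AB(1) h_def in auto)
    have eq: "a k = mixA m h A B k \<and> b k = mixB m h A B k" if "k \<le> m" for k
      using is_nlft_same[OF Suc.prems(2) fs] that by simp
    have "a 0 = complex_of_real (cf h) * A 0" using eq[of 0] AB(1) by (simp add: mixA_def)
    moreover have "b m = complex_of_real (cf h) * (h * A 0)" using eq[of m] AB(1) by (simp add: mixB_def)
    ultimately have "b m = h * a 0" by simp
    then have hg: "h = b m / a 0" using a0 by simp
    define g where "g = b m / a 0"
    note st = strip[OF Suc.prems(1) m g_def]
    have gh: "g = h" using hg g_def by simp
    have e1: "mixA m (-g) a b = mixA m (-h) (mixA m h A B) (mixB m h A B)"
      using mix_cong(1)[of m a "mixA m h A B" b "mixB m h A B" "-h", OF eq] gh by simp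
    have e2: "mixB m (-g) a b = mixB m (-h) (mixA m h A B) (mixB m h A B)"
      using mix_cong(2)[of m a "mixA m h A B" b "mixB m h A B" "-h", OF eq] gh by simp
    have "is_nlft m \<gamma> (mixA m (-h) (mixA m h A B) (mixB m h A B)) (mixB m (-h) (mixA m h A B) (mixB m h A B))"
      by (rule is_nlft_cong[OF AB(2)]) (simp_all add: mix_inv')
    then have "is_nlft m \<gamma> (mixA m (-g) a b) (mixB m (-g) a b)" unfolding e1 e2 .
    note IH = Suc.IH[OF st(1) this]
    show ?thesis
    proof (cases "k = m")
      case True then show ?thesis using hg h_def g_def by simp
    next
      case False then show ?thesis using IH[of k] Suc.prems(3) g_def by simp
    qed
  qed
qed

lemma inv_nlft_eq:
  assumes "(a, b) \<in> Sn n"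
  shows "inv_nlft n a b = invn n a b"
  unfolding inv_nlft_def
proof (rule the_equality)
  show "(\<forall>k\<ge>n. invn n a b k = 0) \<and> is_nlft n (invn n a b) a b"
    using invn_supp invn_correct[OF assms] by auto
  fix \<gamma> assume "(\<forall>k\<ge>n. \<gamma> k = 0) \<and> is_nlft n \<gamma> a b"
  then show "\<gamma> = invn n a b"
    using invn_unique[OF assms] invn_supp by (metis ext not_le)
qed

lemma Sn_norm:
  "(a, b) \<in> Sn n \<Longrightarrow> (\<Sum>k<n. (cmod (a k))\<^sup>2 + (cmod (b k))\<^sup>2) = 1"
proof (induction n arbitrary: a b)
  case 0 then show ?case using Sn_pos by fastforce
next
  case (Suc m)
  show ?case
  proof (cases "m = 0")
    case True then show ?thesis using Sn1_norm Suc.prems by simp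
  next
    case False
    define g where "g = b m / a 0"
    have m: "m \<ge> 1" using False by simp
    note st = strip[OF Suc.prems m g_def]
    have z: "mixA m (-g) a b m = 0" "mixB m (-g) a b m = 0" using Sn_D(1,2)[OF st(1)] by auto
    have "(\<Sum>k<Suc m. (cmod (a k))\<^sup>2 + (cmod (b k))\<^sup>2)
       = (\<Sum>k<Suc m. (cmod (mixA m (-g) a b k))\<^sup>2 + (cmod (mixB m (-g) a b k))\<^sup>2)"
      by (rule mix_norm[symmetric])
    also have "\<dots> = (\<Sum>k<m. (cmod (mixA m (-g) a b k))\<^sup>2 + (cmod (mixB m (-g) a b k))\<^sup>2)"
      using z by simp
    also have "\<dots> = 1" by (rule Suc.IH[OF st(1)])
    finally show ?thesis .
  qed
qed

lemma Sn_bound: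
  assumes "(a, b) \<in> Sn n"
  shows "cmod (a k) \<le> 1" "cmod (b k) \<le> 1"
proof -
  have "cmod (a k) \<le> 1 \<and> cmod (b k) \<le> 1"
  proof (cases "k < n")
    case True
    have "(cmod (a k))\<^sup>2 + (cmod (b k))\<^sup>2 \<le> (\<Sum>k<n. (cmod (a k))\<^sup>2 + (cmod (b k))\<^sup>2)"
      by (rule member_le_sum[of k "{..<n}" "\<lambda>k. (cmod (a k))\<^sup>2 + (cmod (b k))\<^sup>2"]) (use True in auto)
    then have "(cmod (a k))\<^sup>2 \<le> 1" "(cmod (b k))\<^sup>2 \<le> 1"
      using Sn_norm[OF assms] zero_le_power2[of "cmod (a k)"] zero_le_power2[of "cmod (b k)"] by linarith+
    then show ?thesis by (simp add: power_le_one_iff abs_square_le_1)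
  next
    case False then show ?thesis using Sn_D(1,2)[OF assms] by simp
  qed
  then show "cmod (a k) \<le> 1" "cmod (b k) \<le> 1" by auto
qed

lemma sqrt_lip:
  fixes x y :: real
  assumes "x \<ge> 0" "y \<ge> 0"
  shows "\<bar>sqrt (1 + x\<^sup>2) - sqrt (1 + y\<^sup>2)\<bar> \<le> \<bar>x - y\<bar>"
proof -
  define s where "s = sqrt (1 + x\<^sup>2)"
  define t where "t = sqrt (1 + y\<^sup>2)"
  have s2: "s\<^sup>2 = 1 + x\<^sup>2" and t2: "t\<^sup>2 = 1 + y\<^sup>2" by (simp_all add: s_def t_def add_nonneg_nonneg)
  have xs: "x \<le> s" unfolding s_def by (rule real_le_rsqrt) simp
  have yt: "y \<le> t" unfolding t_def by (rule real_le_rsqrt) simp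
  have sp: "s > 0" "t > 0" by (simp_all add: s_def t_def add_pos_nonneg)
  have "(s - t) * (s + t) = (x - y) * (x + y)"
    using s2 t2 by (simp add: algebra_simps power2_eq_square)
  then have "\<bar>s - t\<bar> * (s + t) = \<bar>x - y\<bar> * (x + y)"
    using sp assms by (metis abs_mult abs_of_nonneg add_nonneg_nonneg less_imp_le)
  also have "\<dots> \<le> \<bar>x - y\<bar> * (s + t)" using xs yt by (intro mult_left_mono) auto
  finally have "\<bar>s - t\<bar> * (s + t) \<le> \<bar>x - y\<bar> * (s + t)" .
  then show ?thesis using sp unfolding s_def[symmetric] t_def[symmetric]
    by (metis add_pos_pos mult_le_cancel_right_pos)
qed

lemma cf_lip: "\<bar>cf g - cf g2\<bar> \<le> cmod (g - g2)"
proof -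
  define s where "s = sqrt (1 + (cmod g)\<^sup>2)"
  define t where "t = sqrt (1 + (cmod g2)\<^sup>2)"
  have s1: "s \<ge> 1" "t \<ge> 1" by (simp_all add: s_def t_def)
  have st: "\<bar>s - t\<bar> \<le> cmod (g - g2)"
    using sqrt_lip[of "cmod g" "cmod g2"] norm_triangle_ineq3[of g g2] unfolding s_def t_def by simp
  have "\<bar>cf g - cf g2\<bar> = \<bar>s - t\<bar> / (s * t)" using s1
    by (simp add: cf_def s_def[symmetric] t_def[symmetric] field_simps abs_div)
  also have "\<dots> \<le> \<bar>s - t\<bar> / 1"
  proof (rule divide_left_mono)
    show "1 \<le> s * t" using mult_mono[of 1 s 1 t] s1 by simp
  qed (use s1 in auto)
  finally show ?thesis using st by simp
qed

lemma cfg_le1: "cmod (complex_of_real (cf g) * g) \<le> 1"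
proof -
  have "cmod g \<le> sqrt (1 + (cmod g)\<^sup>2)" by (rule real_le_rsqrt) simp
  moreover have "cmod (complex_of_real (cf g) * g) = cf g * cmod g"
    using cf_pos[of g] by (simp add: norm_mult)
  ultimately show ?thesis by (simp add: cf_def divide_le_eq_1 add_pos_nonneg)
qed

lemma cfg_lip: "cmod (complex_of_real (cf g) * g - complex_of_real (cf g2) * g2) \<le> 2 * cmod (g - g2)"
proof -
  define s where "s = sqrt (1 + (cmod g)\<^sup>2)"
  define t where "t = sqrt (1 + (cmod g2)\<^sup>2)"
  have s1: "s \<ge> 1" "t \<ge> 1" by (simp_all add: s_def t_def)
  have g2t: "cmod g2 \<le> t" unfolding t_def by (rule real_le_rsqrt) simp
  have st: "\<bar>s - t\<bar> \<le> cmod (g - g2)"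
    using sqrt_lip[of "cmod g" "cmod g2"] norm_triangle_ineq3[of g g2] unfolding s_def t_def by simp
  have cf: "cf g = 1 / s" "cf g2 = 1 / t" by (simp_all add: cf_def s_def t_def)
  have "complex_of_real (cf g) * g - complex_of_real (cf g2) * g2
      = complex_of_real (1 / s) * (g - g2) + g2 * complex_of_real ((t - s) / (s * t))"
    using s1 unfolding cf by (simp add: field_simps)
  then have "cmod (complex_of_real (cf g) * g - complex_of_real (cf g2) * g2)
      \<le> cmod (complex_of_real (1 / s) * (g - g2)) + cmod (g2 * complex_of_real ((t - s) / (s * t)))"
    by (metis norm_triangle_ineq)
  also have "cmod (complex_of_real (1 / s) * (g - g2)) \<le> cmod (g - g2)"
  proof -
    have "cmod (complex_of_real (1 / s) * (g - g2)) = cmod (g - g2) / s"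
      using s1 by (simp only: norm_mult norm_of_real) simp
    also have "\<dots> \<le> cmod (g - g2) / 1" by (rule divide_left_mono) (use s1 in auto)
    finally show ?thesis by simp
  qed
  also have "cmod (g2 * complex_of_real ((t - s) / (s * t))) = (cmod g2 / t) * (\<bar>t - s\<bar> / s)"
  proof -
    have sp: "s > 0" "t > 0" using s1 by auto
    have "cmod (g2 * complex_of_real ((t - s) / (s * t))) = cmod g2 * \<bar>(t - s) / (s * t)\<bar>"
      by (simp only: norm_mult norm_of_real)
    also have "\<bar>(t - s) / (s * t)\<bar> = \<bar>t - s\<bar> / (s * t)" using sp by (simp add: abs_div abs_mult)
    finally show ?thesis using sp by (simp add: field_simps)
  qed
  also have "\<dots> \<le> 1 * \<bar>t - s\<bar>"
  proof (rule mult_mono)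
    show "cmod g2 / t \<le> 1" using g2t s1 by simp
    show "\<bar>t - s\<bar> / s \<le> \<bar>t - s\<bar>" using s1
      by (simp add: divide_le_eq mult_le_cancel_left1)
  qed (use s1 in auto)
  finally show ?thesis using st by simp
qed

lemma lin4:
  fixes t u x y t2 u2 x2 y2 :: complex
  shows "cmod (t * x + u * y - (t2 * x2 + u2 * y2)) \<le>
     cmod (t - t2) * cmod x + cmod t2 * cmod (x - x2) + cmod (u - u2) * cmod y + cmod u2 * cmod (y - y2)"
proof -
  have "t * x + u * y - (t2 * x2 + u2 * y2) = (t - t2) * x + t2 * (x - x2) + ((u - u2) * y + u2 * (y - y2))"
    by (simp add: algebra_simps)
  then have "cmod (t * x + u * y - (t2 * x2 + u2 * y2)) \<le> cmod ((t - t2) * x + t2 * (x - x2)) + cmod ((u - u2) * y + u2 * (y - y2))"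
    by (metis norm_triangle_ineq)
  also have "\<dots> \<le> (cmod ((t - t2) * x) + cmod (t2 * (x - x2))) + (cmod ((u - u2) * y) + cmod (u2 * (y - y2)))"
    by (intro add_mono norm_triangle_ineq)
  finally show ?thesis by (simp add: norm_mult)
qed

lemma lin4_bound:
  fixes t u x y t2 u2 x2 y2 :: complex
  assumes "cmod (t - t2) \<le> \<eta>" "cmod (u - u2) \<le> 2 * \<eta>" "cmod x \<le> 1" "cmod y \<le> 1" "cmod t2 \<le> 1" "cmod u2 \<le> 1"
    "cmod (x - x2) \<le> \<epsilon>" "cmod (y - y2) \<le> \<epsilon>"
  shows "cmod (t * x + u * y - (t2 * x2 + u2 * y2)) \<le> 2 * \<epsilon> + 3 * \<eta>"
proof -
  have eta: "\<eta> \<ge> 0" using assms(1) norm_ge_zero[of "t - t2"] by linarith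
  have eps: "\<epsilon> \<ge> 0" using assms(7) norm_ge_zero[of "x - x2"] by linarith
  have "cmod (t - t2) * cmod x \<le> \<eta> * 1" by (rule mult_mono) (use assms eta in auto)
  moreover have "cmod t2 * cmod (x - x2) \<le> 1 * \<epsilon>" by (rule mult_mono) (use assms eps in auto)
  moreover have "cmod (u - u2) * cmod y \<le> (2 * \<eta>) * 1" by (rule mult_mono) (use assms eta in auto)
  moreover have "cmod u2 * cmod (y - y2) \<le> 1 * \<epsilon>" by (rule mult_mono) (use assms eps in auto)
  ultimately show ?thesis using lin4[of t x u y t2 x2 u2 y2] by linarith
qed

lemma mix_diff:
  assumes "cmod (g - g2) \<le> \<eta>" "\<And>k. cmod (a k - a2 k) \<le> \<epsilon> \<and> cmod (b k - b2 k) \<le> \<epsilon>"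
    "\<And>k. cmod (a k) \<le> 1 \<and> cmod (b k) \<le> 1" "\<epsilon> \<ge> 0" "\<eta> \<ge> 0"
  shows "cmod (mixA m (-g) a b k - mixA m (-g2) a2 b2 k) \<le> 2 * \<epsilon> + 3 * \<eta>"
        "cmod (mixB m (-g) a b k - mixB m (-g2) a2 b2 k) \<le> 2 * \<epsilon> + 3 * \<eta>"
proof -
  let ?t = "complex_of_real (cf g)" and ?t2 = "complex_of_real (cf g2)"
  have tt: "cmod (?t - ?t2) \<le> \<eta>" using cf_lip[of g g2] assms(1)
    by (metis norm_of_real of_real_diff order_trans)
  have uu: "cmod (?t * g - ?t2 * g2) \<le> 2 * \<eta>" using cfg_lip[of g g2] assms(1) by linarith
  have uu': "cmod (?t * cnj g - ?t2 * cnj g2) \<le> 2 * \<eta>"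
  proof -
    have "?t * cnj g - ?t2 * cnj g2 = cnj (?t * g - ?t2 * g2)" by simp
    then show ?thesis using uu by (metis complex_mod_cnj)
  qed
  have uu'': "cmod (- (?t * g) - - (?t2 * g2)) \<le> 2 * \<eta>" using uu by (simp add: norm_minus_commute)
  have t2: "cmod ?t2 \<le> 1" using cf_le1[of g2] cf_pos[of g2] by simp
  have u2: "cmod (?t2 * g2) \<le> 1" by (rule cfg_le1)
  have u2': "cmod (?t2 * cnj g2) \<le> 1" using cfg_le1[of g2] by (simp add: norm_mult)
  have u2'': "cmod (- (?t2 * g2)) \<le> 1" using cfg_le1[of g2] by simp
  have nn: "0 \<le> 2 * \<epsilon> + 3 * \<eta>" using assms by simp
  show "cmod (mixA m (-g) a b k - mixA m (-g2) a2 b2 k) \<le> 2 * \<epsilon> + 3 * \<eta>"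
  proof (cases "k \<le> m")
    case True
    have "mixA m (-g) a b k - mixA m (-g2) a2 b2 k = ?t * a k + (?t * cnj g) * b (m - k) - (?t2 * a2 k + (?t2 * cnj g2) * b2 (m - k))"
      using True by (simp add: mixA_def algebra_simps)
    then show ?thesis using lin4_bound[OF tt uu' _ _ t2 u2', of "a k" "b (m - k)" "a2 k" \<epsilon> "b2 (m - k)"] assms(2,3) by simp
  qed (use nn in \<open>simp add: mixA_def\<close>)
  show "cmod (mixB m (-g) a b k - mixB m (-g2) a2 b2 k) \<le> 2 * \<epsilon> + 3 * \<eta>"
  proof (cases "k \<le> m")
    case True
    have "mixB m (-g) a b k - mixB m (-g2) a2 b2 k = ?t * b k + (- (?t * g)) * a (m - k) - (?t2 * b2 k + (- (?t2 * g2)) * a2 (m - k))"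
      using True by (simp add: mixB_def algebra_simps)
    then show ?thesis using lin4_bound[OF tt uu'' _ _ t2 u2'', of "b k" "a (m - k)" "b2 k" \<epsilon> "a2 (m - k)"] assms(2,3) by simp
  qed (use nn in \<open>simp add: mixB_def\<close>)
qed

lemma g_bound:
  assumes "(a, b) \<in> Sn n" "(a2, b2) \<in> Sn n2" "cmod (a 0 - a2 0) \<le> \<epsilon>" "cmod (b m - b2 m) \<le> \<epsilon>"
    "1 / Re (a 0) \<le> D" "1 / Re (a2 0) \<le> D"
  shows "cmod (b m / a 0 - b2 m / a2 0) \<le> \<epsilon> * (D + D\<^sup>2)"
proof -
  obtain r where r: "r > 0" "a 0 = complex_of_real r" using Sn_D(3,4)[OF assms(1)] by metis
  obtain r2 where r2: "r2 > 0" "a2 0 = complex_of_real r2" using Sn_D(3,4)[OF assms(2)] by metis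
  have rD: "1 / r \<le> D" using assms(5) r(2) by simp
  have r2D: "1 / r2 \<le> D" using assms(6) r2(2) by simp
  have e: "\<bar>r - r2\<bar> \<le> \<epsilon>" using assms(3) r r2 by (metis norm_of_real of_real_diff)
  have b2: "cmod (b2 m) \<le> 1" using Sn_bound[OF assms(2)] by simp
  have D: "D \<ge> 0" using rD r(1) by (smt (verit) divide_pos_pos)
  have eps: "\<epsilon> \<ge> 0" using e by linarith
  have "b m / a 0 - b2 m / a2 0 = (b m - b2 m) * complex_of_real (1 / r) + b2 m * complex_of_real ((r2 - r) / (r * r2))"
    using r r2 by (simp add: field_simps)
  then have "cmod (b m / a 0 - b2 m / a2 0) \<le> cmod ((b m - b2 m) * complex_of_real (1 / r)) + cmod (b2 m * complex_of_real ((r2 - r) / (r * r2)))"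
    by (metis norm_triangle_ineq)
  moreover have "cmod ((b m - b2 m) * complex_of_real (1 / r)) \<le> \<epsilon> * D"
  proof -
    have "cmod ((b m - b2 m) * complex_of_real (1 / r)) = cmod (b m - b2 m) * (1 / r)"
      using r(1) by (simp only: norm_mult norm_of_real) simp
    also have "\<dots> \<le> \<epsilon> * D" by (rule mult_mono) (use assms(4) rD r(1) eps in auto)
    finally show ?thesis .
  qed
  moreover have "cmod (b2 m * complex_of_real ((r2 - r) / (r * r2))) \<le> 1 * (\<epsilon> * (D * D))"
  proof -
    have q: "\<bar>(r2 - r) / (r * r2)\<bar> = \<bar>r - r2\<bar> * ((1 / r) * (1 / r2))"
    proof -
      have "\<bar>r2 - r\<bar> = \<bar>r - r2\<bar>" by (rule abs_minus_commute)
      then show ?thesis using r(1) r2(1) by (simp add: abs_div abs_mult)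
    qed
    have "cmod (b2 m * complex_of_real ((r2 - r) / (r * r2))) = cmod (b2 m) * (\<bar>r - r2\<bar> * ((1 / r) * (1 / r2)))"
      unfolding q[symmetric] by (simp only: norm_mult norm_of_real)
    also have "\<dots> \<le> 1 * (\<epsilon> * (D * D))"
    proof -
      have rr: "(1 / r) * (1 / r2) \<le> D * D" by (rule mult_mono) (use rD r2D D r2(1) in auto)
      have X: "\<bar>r - r2\<bar> * ((1 / r) * (1 / r2)) \<le> \<epsilon> * (D * D)"
        by (rule mult_mono) (use e eps r(1) r2(1) rr in auto)
      show ?thesis by (rule mult_mono[OF b2 X]) (use r(1) r2(1) in auto)
    qed
    finally show ?thesis .
  qed
  ultimately have "cmod (b m / a 0 - b2 m / a2 0) \<le> \<epsilon> * D + 1 * (\<epsilon> * (D * D))" by linarith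
  then show ?thesis by (simp add: algebra_simps power2_eq_square)
qed

lemma main_bound:
  "(a, b) \<in> Sn n \<Longrightarrow> (a2, b2) \<in> Sn n \<Longrightarrow> D > 0 \<Longrightarrow>
   (\<forall>k. cmod (a k - a2 k) \<le> \<epsilon> \<and> cmod (b k - b2 k) \<le> \<epsilon>) \<Longrightarrow>
   1 / Re (a 0) \<le> D \<Longrightarrow> 1 / Re (a2 0) \<le> D \<Longrightarrow>
   l1norm n (\<lambda>k. invn n a b k - invn n a2 b2 k) \<le> \<epsilon> * (D + D\<^sup>2) * (\<Sum>k<n. (3 * (1 + D)\<^sup>2) ^ k)"
proof (induction n arbitrary: a b a2 b2 \<epsilon>)
  case 0 then show ?case by (simp add: l1norm_def)
next
  case (Suc m)
  define g where "g = b m / a 0"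
  define g2 where "g2 = b2 m / a2 0"
  have eps: "\<epsilon> \<ge> 0" using Suc.prems(4) norm_ge_zero[of "a 0 - a2 0"] by (meson order_trans)
  have gb: "cmod (g - g2) \<le> \<epsilon> * (D + D\<^sup>2)" unfolding g_def g2_def
    by (rule g_bound[OF Suc.prems(1,2)]) (use Suc.prems in auto)
  have DD: "D + D\<^sup>2 \<ge> 0" using Suc.prems(3) by simp
  have l1: "l1norm (Suc m) (\<lambda>k. invn (Suc m) a b k - invn (Suc m) a2 b2 k)
      = l1norm m (\<lambda>k. invn (Suc m) a b k - invn (Suc m) a2 b2 k) + cmod (g - g2)"
    by (simp add: l1norm_def g_def g2_def)
  show ?case
  proof (cases "m = 0")
    case True
    then show ?thesis using l1 gb by (simp add: l1norm_def)
  next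
    case False
    then have m: "m \<ge> 1" by simp
    note st1 = strip[OF Suc.prems(1) m g_def]
    note st2 = strip[OF Suc.prems(2) m g2_def]
    define \<epsilon>' where "\<epsilon>' = 3 * \<epsilon> * (1 + D)\<^sup>2"
    have e': "2 * \<epsilon> + 3 * (\<epsilon> * (D + D\<^sup>2)) \<le> \<epsilon>'"
      using eps Suc.prems(3) unfolding \<epsilon>'_def by (simp add: power2_eq_square algebra_simps mult_nonneg_nonneg)
    have bnd: "\<And>k. cmod (a k) \<le> 1 \<and> cmod (b k) \<le> 1" using Sn_bound[OF Suc.prems(1)] by simp
    have md: "\<forall>k. cmod (mixA m (-g) a b k - mixA m (-g2) a2 b2 k) \<le> \<epsilon>' \<and> cmod (mixB m (-g) a b k - mixB m (-g2) a2 b2 k) \<le> \<epsilon>'"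
    proof
      fix k
      have cd: "\<And>k. cmod (a k - a2 k) \<le> \<epsilon> \<and> cmod (b k - b2 k) \<le> \<epsilon>" using Suc.prems(4) by blast
      have eta: "\<epsilon> * (D + D\<^sup>2) \<ge> 0" using eps DD by simp
      note z = mix_diff[where a=a and b=b and ?a2.0=a2 and ?b2.0=b2 and m=m and k=k, OF gb cd bnd eps eta]
      show "cmod (mixA m (-g) a b k - mixA m (-g2) a2 b2 k) \<le> \<epsilon>' \<and> cmod (mixB m (-g) a b k - mixB m (-g2) a2 b2 k) \<le> \<epsilon>'"
        using z(1) z(2) e' by linarith
    qed
    have pos1: "Re (a 0) > 0" using Sn_D(4)[OF Suc.prems(1)] .
    have pos2: "Re (a2 0) > 0" using Sn_D(4)[OF Suc.prems(2)] .
    have D1: "1 / Re (mixA m (-g) a b 0) \<le> D"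
      using st1(2) pos1 Suc.prems(5) by (smt (verit) frac_le zero_less_one)
    have D2: "1 / Re (mixA m (-g2) a2 b2 0) \<le> D"
      using st2(2) pos2 Suc.prems(6) by (smt (verit) frac_le zero_less_one)
    note IH = Suc.IH[OF st1(1) st2(1) Suc.prems(3) md D1 D2]
    have "l1norm m (\<lambda>k. invn (Suc m) a b k - invn (Suc m) a2 b2 k)
        = l1norm m (\<lambda>k. invn m (mixA m (-g) a b) (mixB m (-g) a b) k - invn m (mixA m (-g2) a2 b2) (mixB m (-g2) a2 b2) k)"
      unfolding l1norm_def by (rule sum.cong) (auto simp: g_def g2_def)
    also have "\<dots> \<le> \<epsilon>' * (D + D\<^sup>2) * (\<Sum>k<m. (3 * (1 + D)\<^sup>2) ^ k)" by (rule IH)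
    finally have "l1norm (Suc m) (\<lambda>k. invn (Suc m) a b k - invn (Suc m) a2 b2 k)
        \<le> \<epsilon>' * (D + D\<^sup>2) * (\<Sum>k<m. (3 * (1 + D)\<^sup>2) ^ k) + \<epsilon> * (D + D\<^sup>2)"
      using l1 gb by linarith
    also have "\<dots> = \<epsilon> * (D + D\<^sup>2) * (\<Sum>k<Suc m. (3 * (1 + D)\<^sup>2) ^ k)"
    proof -
      have "(\<Sum>k<Suc m. (3 * (1 + D)\<^sup>2) ^ k) = 1 + (3 * (1 + D)\<^sup>2) * (\<Sum>k<m. (3 * (1 + D)\<^sup>2) ^ k)"
        unfolding sum.lessThan_Suc_shift by (simp add: sum_distrib_left del: sum.lessThan_Suc)
      then show ?thesis unfolding \<epsilon>'_def by (simp add: algebra_simps)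
    qed
    finally show ?thesis .
  qed
qed

lemma supnorm_ge: "k < n \<Longrightarrow> cmod (v k) \<le> supnorm n v"
  unfolding supnorm_def by (rule Max_ge) auto

lemma supnorm_nonneg: "supnorm n v \<ge> 0"
  unfolding supnorm_def by (rule Max_ge) auto

lemma coeff_diff:
  assumes "(a, b) \<in> Sn n" "(a2, b2) \<in> Sn n" "supnorm n (\<lambda>k. a k - a2 k) \<le> \<epsilon>" "supnorm n (\<lambda>k. b k - b2 k) \<le> \<epsilon>"
  shows "\<forall>k. cmod (a k - a2 k) \<le> \<epsilon> \<and> cmod (b k - b2 k) \<le> \<epsilon>"
proof
  fix k
  have e: "\<epsilon> \<ge> 0" using assms(3) supnorm_nonneg by (meson order_trans)
  show "cmod (a k - a2 k) \<le> \<epsilon> \<and> cmod (b k - b2 k) \<le> \<epsilon>"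
  proof (cases "k < n")
    case True
    then show ?thesis using supnorm_ge[OF True, of "\<lambda>k. a k - a2 k"] supnorm_ge[OF True, of "\<lambda>k. b k - b2 k"] assms(3,4)
      by auto
  next
    case False
    then show ?thesis using Sn_D(1,2)[OF assms(1)] Sn_D(1,2)[OF assms(2)] e by simp
  qed
qed

lemma geom_le:
  fixes r :: real
  assumes "r \<ge> 1"
  shows "(\<Sum>k<n. r ^ k) \<le> real n * r ^ (n - 1)"
proof -
  have "(\<Sum>k<n. r ^ k) \<le> (\<Sum>k<n. r ^ (n - 1))"
    by (rule sum_mono) (use assms in \<open>auto intro!: power_increasing\<close>)
  then show ?thesis by simp
qed

lemma final_ineq:
  fixes \<epsilon> D :: real and n :: nat
  assumes "\<epsilon> > 0" "D > 0" "n \<ge> 1"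
  shows "\<epsilon> * (D + D\<^sup>2) * (\<Sum>k<n. (3 * (1 + D)\<^sup>2) ^ k) < \<epsilon> * (3 * real n) ^ n * (1 + D) ^ (2 * n)"
proof -
  define R where "R = 3 * (1 + D)\<^sup>2"
  obtain p where p: "n = Suc p" using assms(3) by (cases n) auto
  have "(1 + D)\<^sup>2 \<ge> 1" using assms(2) by (intro one_le_power) simp
  then have R1: "R \<ge> 1" unfolding R_def by linarith
  have S: "(\<Sum>k<n. R ^ k) \<le> real n * R ^ p" using geom_le[OF R1, of n] p by simp
  have DD: "0 \<le> \<epsilon> * (D + D\<^sup>2)" using assms by simp
  have "\<epsilon> * (D + D\<^sup>2) * (\<Sum>k<n. R ^ k) \<le> \<epsilon> * (D + D\<^sup>2) * (real n * R ^ p)"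
    by (rule mult_left_mono[OF S DD])
  also have "\<dots> < \<epsilon> * (1 + D)\<^sup>2 * (real n * R ^ p)"
  proof -
    have "D + D\<^sup>2 < (1 + D)\<^sup>2" using assms(2) by (simp add: power2_eq_square algebra_simps)
    moreover have "real n * R ^ p > 0" using p R1 by simp
    ultimately have "(D + D\<^sup>2) * (real n * R ^ p) < (1 + D)\<^sup>2 * (real n * R ^ p)"
      by (rule mult_strict_right_mono)
    from mult_strict_left_mono[OF this assms(1)] show ?thesis by (simp only: mult.assoc)
  qed
  also have "\<dots> = \<epsilon> * (real n * 3 ^ p) * (1 + D) ^ (2 * n)"
  proof -
    have e1: "R ^ p = 3 ^ p * (1 + D) ^ (2 * p)" unfolding R_def by (simp add: power_mult_distrib power_mult)
    have nn: "2 * n = 2 + 2 * p" using p by simp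
    have e2: "(1 + D) ^ (2 * n) = (1 + D)\<^sup>2 * (1 + D) ^ (2 * p)" by (simp only: nn power_add)
    show ?thesis unfolding e1 e2 by (simp only: mult_ac)
  qed
  also have "\<dots> \<le> \<epsilon> * (3 * real n) ^ n * (1 + D) ^ (2 * n)"
  proof -
    have "real n ^ 1 \<le> real n ^ n" by (rule power_increasing) (use assms(3) in auto)
    then have n1: "real n \<le> real n ^ n" by simp
    have t: "(3::real) ^ p \<le> 3 ^ n" by (rule power_increasing) (use p in auto)
    have "real n * 3 ^ p \<le> real n ^ n * 3 ^ n" by (rule mult_mono[OF n1 t]) auto
    also have "\<dots> = (3 * real n) ^ n" by (simp add: power_mult_distrib)
    finally have "real n * 3 ^ p \<le> (3 * real n) ^ n" .
    then have "\<epsilon> * (real n * 3 ^ p) \<le> \<epsilon> * (3 * real n) ^ n" using assms(1) by simp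
    then show ?thesis by (rule mult_right_mono) simp
  qed
  finally show ?thesis unfolding R_def .
qed

theorem lemma6p2:
  fixes n :: nat and a b a' b' :: "nat \<Rightarrow> complex" and \<epsilon> :: real
  assumes "n \<ge> 2"
    and "(a, b) \<in> Sn n" and "(a', b') \<in> Sn n"
    and "\<epsilon> > 0"
    and "supnorm n (\<lambda>k. a k - a' k) \<le> \<epsilon>"
    and "supnorm n (\<lambda>k. b k - b' k) \<le> \<epsilon>"
  shows "l1norm n (\<lambda>k. inv_nlft n a b k - inv_nlft n a' b' k)
           < \<epsilon> * (3 * real n) ^ n * (1 + 1 / min (Re (a 0)) (Re (a' 0))) ^ (2 * n)
       \<and> inj_on (\<lambda>(a, b). inv_nlft n a b) (Sn n)
       \<and> (\<forall>p\<in>Sn n. \<exists>r>0. \<exists>L. \<forall>q\<in>Sn n. \<forall>q'\<in>Sn n.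
            distS n p q < r \<and> distS n p q' < r \<longrightarrow>
            l1norm n (\<lambda>k. inv_nlft n (fst q) (snd q) k - inv_nlft n (fst q') (snd q') k)
              \<le> L * distS n q q')"
proof (intro conjI)
  have n1: "n \<ge> 1" using assms(1) by simp
  define \<delta> where "\<delta> = min (Re (a 0)) (Re (a' 0))"
  have p1: "Re (a 0) > 0" using Sn_D(4)[OF assms(2)] .
  have p2: "Re (a' 0) > 0" using Sn_D(4)[OF assms(3)] .
  have dpos: "\<delta> > 0" using p1 p2 by (simp add: \<delta>_def)
  define D where "D = 1 / \<delta>"
  have Dpos: "D > 0" using dpos by (simp add: D_def)
  have D1: "1 / Re (a 0) \<le> D" unfolding D_def
    by (rule divide_left_mono) (use dpos p1 in \<open>auto simp: \<delta>_def\<close>)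
  have D2: "1 / Re (a' 0) \<le> D" unfolding D_def
    by (rule divide_left_mono) (use dpos p2 in \<open>auto simp: \<delta>_def\<close>)
  have cd: "\<forall>k. cmod (a k - a' k) \<le> \<epsilon> \<and> cmod (b k - b' k) \<le> \<epsilon>" by (rule coeff_diff[OF assms(2,3,5,6)])
  have "l1norm n (\<lambda>k. inv_nlft n a b k - inv_nlft n a' b' k) \<le> \<epsilon> * (D + D\<^sup>2) * (\<Sum>k<n. (3 * (1 + D)\<^sup>2) ^ k)"
    unfolding inv_nlft_eq[OF assms(2)] inv_nlft_eq[OF assms(3)]
    by (rule main_bound[OF assms(2,3) Dpos cd D1 D2])
  also have "\<dots> < \<epsilon> * (3 * real n) ^ n * (1 + D) ^ (2 * n)"
    by (rule final_ineq[OF assms(4) Dpos n1])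
  finally show "l1norm n (\<lambda>k. inv_nlft n a b k - inv_nlft n a' b' k)
           < \<epsilon> * (3 * real n) ^ n * (1 + 1 / min (Re (a 0)) (Re (a' 0))) ^ (2 * n)"
    unfolding D_def \<delta>_def .
next
  show "inj_on (\<lambda>(a, b). inv_nlft n a b) (Sn n)"
  proof (rule inj_onI)
    fix p q assume p: "p \<in> Sn n" and q: "q \<in> Sn n" and eq: "(\<lambda>(a, b). inv_nlft n a b) p = (\<lambda>(a, b). inv_nlft n a b) q"
    obtain pa pb where pp: "p = (pa, pb)" by (cases p)
    obtain qa qb where qq: "q = (qa, qb)" by (cases q)
    have p': "(pa, pb) \<in> Sn n" and q': "(qa, qb) \<in> Sn n" using p q pp qq by auto
    have ieq: "invn n pa pb = invn n qa qb" using eq pp qq inv_nlft_eq[OF p'] inv_nlft_eq[OF q'] by simp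
    have i1: "is_nlft n (invn n pa pb) pa pb" by (rule invn_correct[OF p'])
    have i2: "is_nlft n (invn n pa pb) qa qb" using invn_correct[OF q'] ieq by simp
    have "pa k = qa k \<and> pb k = qb k" for k
    proof (cases "k < n")
      case True then show ?thesis using is_nlft_same[OF i1 i2] by blast
    next
      case False then show ?thesis using Sn_D(1,2)[OF p'] Sn_D(1,2)[OF q'] by simp
    qed
    then show "p = q" using pp qq by (auto intro!: ext)
  qed
next
  show "\<forall>p\<in>Sn n. \<exists>r>0. \<exists>L. \<forall>q\<in>Sn n. \<forall>q'\<in>Sn n.
            distS n p q < r \<and> distS n p q' < r \<longrightarrow>
            l1norm n (\<lambda>k. inv_nlft n (fst q) (snd q) k - inv_nlft n (fst q') (snd q') k)
              \<le> L * distS n q q'"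
  proof
    fix p assume p: "p \<in> Sn n"
    obtain pa pb where pp: "p = (pa, pb)" by (cases p)
    have p': "(pa, pb) \<in> Sn n" using p pp by simp
    define \<rho> where "\<rho> = Re (pa 0)"
    have rho: "\<rho> > 0" using Sn_D(4)[OF p'] \<rho>_def by simp
    define D where "D = 2 / \<rho>"
    have Dpos: "D > 0" using rho by (simp add: D_def)
    have n0: "0 < n" using assms(1) by simp
    have close: "1 / Re (qa 0) \<le> D" if q: "(qa, qb) \<in> Sn n" and d: "distS n p (qa, qb) < \<rho> / 2" for qa qb
    proof -
      have "cmod (pa 0 - qa 0) \<le> supnorm n (\<lambda>k. pa k - qa k)" by (rule supnorm_ge[OF n0])
      also have "\<dots> \<le> distS n p (qa, qb)" unfolding distS_def pp by simp
      finally have c: "cmod (pa 0 - qa 0) < \<rho> / 2" using d by simp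
      have "Re (pa 0 - qa 0) \<le> cmod (pa 0 - qa 0)" by (rule complex_Re_le_cmod)
      then have "Re (qa 0) > \<rho> / 2" using c \<rho>_def by simp
      then have "1 / Re (qa 0) \<le> 1 / (\<rho> / 2)"
        using rho by (intro divide_left_mono) auto
      then show ?thesis by (simp add: D_def)
    qed
    show "\<exists>r>0. \<exists>L. \<forall>q\<in>Sn n. \<forall>q'\<in>Sn n.
            distS n p q < r \<and> distS n p q' < r \<longrightarrow>
            l1norm n (\<lambda>k. inv_nlft n (fst q) (snd q) k - inv_nlft n (fst q') (snd q') k)
              \<le> L * distS n q q'"
    proof (intro exI conjI ballI impI)
      show "\<rho> / 2 > 0" using rho by simp
      fix q q' assume q: "q \<in> Sn n" and q2: "q' \<in> Sn n" and d: "distS n p q < \<rho> / 2 \<and> distS n p q' < \<rho> / 2"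
      obtain qa qb where qq: "q = (qa, qb)" by (cases q)
      obtain qa' qb' where qq': "q' = (qa', qb')" by (cases q')
      have qS: "(qa, qb) \<in> Sn n" and qS': "(qa', qb') \<in> Sn n" using q q2 qq qq' by auto
      have c1: "1 / Re (qa 0) \<le> D" using close[OF qS] d qq by simp
      have c2: "1 / Re (qa' 0) \<le> D" using close[OF qS'] d qq' by simp
      define \<epsilon> where "\<epsilon> = distS n q q'"
      have s1: "supnorm n (\<lambda>k. qa k - qa' k) \<le> \<epsilon>" unfolding \<epsilon>_def distS_def qq qq' by simp
      have s2: "supnorm n (\<lambda>k. qb k - qb' k) \<le> \<epsilon>" unfolding \<epsilon>_def distS_def qq qq' by simp
      have cd: "\<forall>k. cmod (qa k - qa' k) \<le> \<epsilon> \<and> cmod (qb k - qb' k) \<le> \<epsilon>" by (rule coeff_diff[OF qS qS' s1 s2])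
      have "l1norm n (\<lambda>k. inv_nlft n (fst q) (snd q) k - inv_nlft n (fst q') (snd q') k)
          = l1norm n (\<lambda>k. invn n qa qb k - invn n qa' qb' k)"
        using qq qq' inv_nlft_eq[OF qS] inv_nlft_eq[OF qS'] by simp
      also have "\<dots> \<le> \<epsilon> * (D + D\<^sup>2) * (\<Sum>k<n. (3 * (1 + D)\<^sup>2) ^ k)"
        by (rule main_bound[OF qS qS' Dpos cd c1 c2])
      also have "\<dots> = ((D + D\<^sup>2) * (\<Sum>k<n. (3 * (1 + D)\<^sup>2) ^ k)) * distS n q q'"
        by (simp add: \<epsilon>_def algebra_simps)
      finally show "l1norm n (\<lambda>k. inv_nlft n (fst q) (snd q) k - inv_nlft n (fst q') (snd q') k)
          \<le> ((D + D\<^sup>2) * (\<Sum>k<n. (3 * (1 + D)\<^sup>2) ^ k)) * distS n q q'" .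
    qed
  qed
qed

end
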